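(* Let $d\ge1$, $\mathcal{C}$ the middle-thirds Cantor set, $\mathcal{K}=\mathcal{C}^d$, $s=\dim_H\mathcal{K}$, and $\mu$ the restriction to $\mathcal{K}$ of the $s$-dimensional Hausdorff measure. Then $\alpha_1(\mu)=\frac{\log2}{\log3}$.
   Context: $\alpha_1(\mu)=\liminf_{\varepsilon\to0}\frac{\log\sup_{\mathcal{L}}\mu(\mathcal{L}^{(\varepsilon)})}{\log\varepsilon}$, the supremum over affine hyperplanes $\mathcal{L}$ of $\mathbb{R}^d$ and $\mathcal{L}^{(\varepsilon)}$ the open Euclidean $\varepsilon$-neighborhood of $\mathcal{L}$. *)

theory Defs
  imports "HOL-Analysis.Analysis"
begin

fun cantor_stage :: "nat \<Rightarrow> real set" where
  "cantor_stage 0 = {0..1}"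
| "cantor_stage (Suc n) =
     (\<lambda>x. x / 3) ` cantor_stage n \<union> (\<lambda>x. x / 3 + 2 / 3) ` cantor_stage n"

definition cantor_set :: "real set" where
  "cantor_set = (\<Inter>n. cantor_stage n)"

text \<open>The d-fold product C^d inside real^'n (d = CARD('n)).\<close>
definition cantor_dust :: "(real ^ 'n) set" where
  "cantor_dust = {x. \<forall>i. x $ i \<in> cantor_set}"

text \<open>s-dimensional gauge of a set, with convention 0^0 = 1 and gauge of {} = 0.\<close>
definition hgauge :: "real \<Rightarrow> 'a::metric_space set \<Rightarrow> ennreal" where
  "hgauge s U = (if U = {} then 0
                 else if diameter U = 0 then (if s = 0 then 1 else 0)
                 else ennreal (diameter U powr s))"

definition hausdorff_pre :: "real \<Rightarrow> real \<Rightarrow> 'a::metric_space set \<Rightarrow> ennreal" where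
  "hausdorff_pre s \<delta> A =
     (INF U \<in> {U :: nat \<Rightarrow> 'a set. A \<subseteq> (\<Union>i. U i) \<and>
                 (\<forall>i. bounded (U i) \<and> diameter (U i) \<le> \<delta>)}.
        \<Sum>i. hgauge s (U i))"

definition hausdorff_measure :: "real \<Rightarrow> 'a::metric_space set \<Rightarrow> ennreal" where
  "hausdorff_measure s A = (SUP \<delta> \<in> {0<..}. hausdorff_pre s \<delta> A)"

definition hausdorff_dim :: "'a::metric_space set \<Rightarrow> real" where
  "hausdorff_dim A = Inf {t. t \<ge> 0 \<and> hausdorff_measure t A = 0}"

definition affine_hyperplanes :: "(real ^ 'n) set set" where
  "affine_hyperplanes = {{x. a \<bullet> x = b} | a b. a \<noteq> 0}"

definition open_nbhd :: "'a::metric_space set \<Rightarrow> real \<Rightarrow> 'a set" where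
  "open_nbhd L \<epsilon> = {x. \<exists>y\<in>L. dist x y < \<epsilon>}"

definition alpha1 :: "((real ^ 'n) set \<Rightarrow> ennreal) \<Rightarrow> ereal" where
  "alpha1 \<mu> = Liminf (at_right 0)
     (\<lambda>\<epsilon>. ereal (ln (enn2real (SUP L \<in> affine_hyperplanes. \<mu> (open_nbhd L \<epsilon>))) / ln \<epsilon>))"

end

theory Submission
  imports Defs
begin


fun CP :: "nat \<Rightarrow> nat set" where
  "CP 0 = {0}"
| "CP (Suc m) = CP m \<union> (\<lambda>p. p + 2 * 3^m) ` CP m"

definition ivl :: "nat \<Rightarrow> nat \<Rightarrow> real set" where
  "ivl m p = {real p / 3^m .. (real p + 1) / 3^m}"

lemma CP_finite: "finite (CP m)" by (induction m) auto

lemma CP_less: "p \<in> CP m \<Longrightarrow> p < 3^m"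
proof (induction m arbitrary: p)
  case 0 then show ?case by simp
next
  case (Suc m)
  then show ?case by (auto dest!: Suc.IH)
qed

lemma CP_zero: "0 \<in> CP m" by (induction m) auto

lemma CP_card: "card (CP m) = 2^m"
proof (induction m)
  case 0 then show ?case by simp
next
  case (Suc m)
  have d: "CP m \<inter> (\<lambda>p. p + 2 * 3^m) ` CP m = {}"
    using CP_less[of _ m] by fastforce
  have "card (CP (Suc m)) = card (CP m) + card ((\<lambda>p. p + 2 * 3^m) ` CP m)"
    using d CP_finite by (simp add: card_Un_disjoint)
  also have "card ((\<lambda>p. p + 2 * 3^m) ` CP m) = card (CP m)"
    by (rule card_image) (auto simp: inj_on_def)
  finally show ?case using Suc by simp
qed

lemma CP_sep: "p \<in> CP m \<Longrightarrow> q \<in> CP m \<Longrightarrow> p \<noteq> q \<Longrightarrow> p + 2 \<le> q \<or> q + 2 \<le> p"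
proof (induction m arbitrary: p q)
  case 0 then show ?case by simp
next
  case (Suc m)
  have "(1::nat) \<le> 3^m" by simp
  have L: "x < 3^m" if "x \<in> CP m" for x using CP_less that by blast
  consider "p \<in> CP m" | p' where "p' \<in> CP m" "p = p' + 2*3^m" using Suc.prems by auto
  then show ?case
  proof cases
    case 1
    consider "q \<in> CP m" | q' where "q' \<in> CP m" "q = q' + 2*3^m" using Suc.prems by auto
    then show ?thesis
    proof cases
      case 1 then show ?thesis using Suc \<open>p \<in> CP m\<close> by blast
    next
      case 2 then show ?thesis using L[of p] \<open>p \<in> CP m\<close> by simp
    qed
  next
    case 2
    consider "q \<in> CP m" | q' where "q' \<in> CP m" "q = q' + 2*3^m" using Suc.prems by auto
    then show ?thesis
    proof cases
      case 1 then show ?thesis using L[of q] 2 by simp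
    next
      case 3: 2
      have "p' \<noteq> q'" using 2 3 Suc.prems by auto
      then show ?thesis using Suc.IH[of p' q'] 2 3 by auto
    qed
  qed
qed

lemma CP_decomp: "CP (k + j) = {3^j * q + r | q r. q \<in> CP k \<and> r \<in> CP j}"
proof (induction k)
  case 0 then show ?case by simp
next
  case (Suc k)
  have "CP (Suc k + j) = CP (k + j) \<union> (\<lambda>p. p + 2 * 3^(k+j)) ` CP (k+j)" by simp
  also have "\<dots> = {3^j * q + r | q r. q \<in> CP (Suc k) \<and> r \<in> CP j}"
  proof -
    have e: "3^j * (q + 2 * 3^k) + r = (3^j * q + r) + 2 * 3^(k+j)" for q r :: nat
      by (simp add: algebra_simps power_add)
    show ?thesis unfolding Suc CP.simps
    proof (intro equalityI subsetI)
      fix x assume "x \<in> {3 ^ j * q + r |q r. q \<in> CP k \<and> r \<in> CP j} \<union>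
          (\<lambda>p. p + 2 * 3 ^ (k + j)) ` {3 ^ j * q + r |q r. q \<in> CP k \<and> r \<in> CP j}"
      then show "x \<in> {3 ^ j * q + r |q r. q \<in> CP k \<union> (\<lambda>p. p + 2 * 3 ^ k) ` CP k \<and> r \<in> CP j}"
      proof
        assume "x \<in> {3 ^ j * q + r |q r. q \<in> CP k \<and> r \<in> CP j}" then show ?thesis by blast
      next
        assume "x \<in> (\<lambda>p. p + 2 * 3 ^ (k + j)) ` {3 ^ j * q + r |q r. q \<in> CP k \<and> r \<in> CP j}"
        then obtain q r where "q \<in> CP k" "r \<in> CP j" "x = 3^j * (q + 2 * 3^k) + r" using e by auto
        then show ?thesis by blast
      qed
    next
      fix x assume "x \<in> {3 ^ j * q + r |q r. q \<in> CP k \<union> (\<lambda>p. p + 2 * 3 ^ k) ` CP k \<and> r \<in> CP j}"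
      then obtain q r where qr: "q \<in> CP k \<union> (\<lambda>p. p + 2 * 3 ^ k) ` CP k" "r \<in> CP j" "x = 3^j * q + r" by blast
      from qr(1) show "x \<in> {3 ^ j * q + r |q r. q \<in> CP k \<and> r \<in> CP j} \<union>
          (\<lambda>p. p + 2 * 3 ^ (k + j)) ` {3 ^ j * q + r |q r. q \<in> CP k \<and> r \<in> CP j}"
      proof
        assume "q \<in> CP k" then show ?thesis using qr by blast
      next
        assume "q \<in> (\<lambda>p. p + 2 * 3 ^ k) ` CP k"
        then obtain q' where "q' \<in> CP k" "q = q' + 2 * 3^k" by blast
        then have "x = (3^j * q' + r) + 2 * 3^(k+j)" using qr e by simp
        then show ?thesis using \<open>q' \<in> CP k\<close> qr by blast
      qed
    qed
  qed
  finally show ?case .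
qed

lemma img_div3: "(\<lambda>x::real. x / 3 + c) ` {a..b} = {a/3 + c .. b/3 + c}"
proof (intro equalityI subsetI)
  fix y assume "y \<in> {a/3 + c .. b/3 + c}"
  then have "3 * (y - c) \<in> {a..b}" by auto
  moreover have "y = 3 * (y - c) / 3 + c" by (simp add: field_simps)
  ultimately show "y \<in> (\<lambda>x::real. x / 3 + c) ` {a..b}" by blast
qed auto

lemma stage_eq: "cantor_stage m = (\<Union>p\<in>CP m. ivl m p)"
proof (induction m)
  case 0 then show ?case by (simp add: ivl_def)
next
  case (Suc m)
  have A: "(\<lambda>x. x / 3) ` ivl m p = ivl (Suc m) p" for p
    using img_div3[of 0 "real p / 3^m" "(real p + 1) / 3^m"] by (simp add: ivl_def)
  have B: "(\<lambda>x. x / 3 + 2/3) ` ivl m p = ivl (Suc m) (p + 2 * 3^m)" for p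
  proof -
    have "(\<lambda>x. x / 3 + 2/3) ` ivl m p = {real p / 3^m / 3 + 2/3 .. (real p + 1) / 3^m / 3 + 2/3}"
      using img_div3 by (simp add: ivl_def)
    also have "real p / 3^m / 3 + 2/3 = real (p + 2 * 3^m) / 3^Suc m"
      by (simp add: field_simps)
    also have "(real p + 1) / 3^m / 3 + 2/3 = (real (p + 2 * 3^m) + 1) / 3^Suc m"
      by (simp add: field_simps)
    finally show ?thesis by (simp add: ivl_def)
  qed
  show ?case
    by (simp add: Suc image_UN image_Un A B UN_Un)
qed

lemma cantor_set_iff: "x \<in> cantor_set \<longleftrightarrow> (\<forall>m. \<exists>p\<in>CP m. x \<in> ivl m p)"
  by (simp add: cantor_set_def stage_eq)

lemma ivl_mem: "x \<in> ivl m p \<longleftrightarrow> real p / 3^m \<le> x \<and> x \<le> (real p + 1) / 3^m"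
  by (simp add: ivl_def)

lemma ivl_self: "real p / 3^m \<in> ivl m p"
  by (simp add: ivl_mem divide_right_mono)

lemma ivl_far:
  assumes "p \<in> CP m" "q \<in> CP m" "p \<noteq> q" "x \<in> ivl m p"
  shows "x \<le> real q / 3^m - 1/3^m \<or> x \<ge> (real q + 1) / 3^m + 1 / 3^m"
proof -
  have "p + 2 \<le> q \<or> q + 2 \<le> p" using CP_sep assms by blast
  then have "real p + 2 \<le> real q \<or> real q + 2 \<le> real p" by linarith
  then show ?thesis
  proof
    assume "real p + 2 \<le> real q"
    then have "(real p + 2) * 3^m \<le> real q * 3^m" by (rule mult_right_mono) auto
    then have "(real p + 1) / 3^m \<le> real q / 3^m - 1/3^m" by (simp add: field_simps)
    then show ?thesis using assms(4) by (auto simp: ivl_mem)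
  next
    assume "real q + 2 \<le> real p"
    then have "(real q + 2) * 3^m \<le> real p * 3^m" by (rule mult_right_mono) auto
    then have "real p / 3^m \<ge> (real q + 1) / 3^m + 1/3^m" by (simp add: field_simps)
    then show ?thesis using assms(4) by (auto simp: ivl_mem)
  qed
qed

lemma ivl_unique:
  assumes "p \<in> CP m" "q \<in> CP m" "x \<in> ivl m p" "x \<in> ivl m q"
  shows "p = q"
proof (rule ccontr)
  assume "p \<noteq> q"
  from ivl_far[OF assms(1,2) this assms(3)] assms(4) show False
    by (auto simp: ivl_mem field_simps)
qed

lemma ivl_nest:
  assumes "r \<in> CP j"
  shows "ivl (k + j) (3^j * q + r) \<subseteq> ivl k q"
proof -
  have "r < 3^j" using CP_less assms by blast
  then have r1: "real r + 1 \<le> 3^j" by (metis Suc_leI of_nat_Suc of_nat_le_iff of_nat_numeral of_nat_power add.commute)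
  have "real (3^j * q + r) / 3^(k+j) \<ge> real q / 3^k"
    by (simp add: power_add field_simps)
  moreover have "(real (3^j * q + r) + 1) / 3^(k+j) \<le> (real q + 1) / 3^k"
  proof -
    have "(real r + 1) * 3^k \<le> 3^j * 3^k" using r1 by (rule mult_right_mono) auto
    then show ?thesis by (simp add: power_add field_simps)
  qed
  ultimately show ?thesis by (auto simp: ivl_mem)
qed

lemma corner_in_cantor:
  assumes "p \<in> CP m"
  shows "real p / 3^m \<in> cantor_set"
  unfolding cantor_set_iff
proof
  fix m'
  show "\<exists>q\<in>CP m'. real p / 3 ^ m \<in> ivl m' q"
  proof (cases "m \<le> m'")
    case True
    then obtain j where j: "m' = m + j" using le_Suc_ex by blast
    have "3^j * p + 0 \<in> CP m'" using CP_decomp[of m j] j assms CP_zero by blast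
    moreover have "real p / 3 ^ m \<in> ivl m' (3^j * p + 0)"
      by (simp add: ivl_mem j power_add field_simps)
    ultimately show ?thesis by blast
  next
    case False
    then obtain j where j: "m = m' + j" using le_Suc_ex[of m' m] by auto
    obtain q r where qr: "q \<in> CP m'" "r \<in> CP j" "p = 3^j * q + r"
      using CP_decomp[of m' j] j assms by blast
    have "real p / 3^m \<in> ivl m p" by (rule ivl_self)
    then have "real p / 3 ^ m \<in> ivl m' q" using ivl_nest[OF qr(2), of m' q] qr j by auto
    then show ?thesis using qr by blast
  qed
qed

lemma desc1:
  assumes "q \<in> CP k"
  shows "{p \<in> CP (k + j). real p / 3^(k+j) \<in> ivl k q} = (\<lambda>r. 3^j * q + r) ` CP j"
proof (intro equalityI subsetI)
  fix p assume "p \<in> {p \<in> CP (k + j). real p / 3^(k+j) \<in> ivl k q}"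
  then have p: "p \<in> CP (k+j)" "real p / 3^(k+j) \<in> ivl k q" by auto
  obtain q' r where qr: "q' \<in> CP k" "r \<in> CP j" "p = 3^j * q' + r"
    using CP_decomp[of k j] p by blast
  have "real p / 3^(k+j) \<in> ivl (k+j) p" by (rule ivl_self)
  then have "real p / 3^(k+j) \<in> ivl k q'" using ivl_nest[OF qr(2), of k q'] qr by auto
  then have "q' = q" using ivl_unique[OF qr(1) assms] p by blast
  then show "p \<in> (\<lambda>r. 3^j * q + r) ` CP j" using qr by blast
next
  fix p assume "p \<in> (\<lambda>r. 3^j * q + r) ` CP j"
  then obtain r where r: "r \<in> CP j" "p = 3^j * q + r" by blast
  have "p \<in> CP (k + j)" using CP_decomp[of k j] r assms by blast
  moreover have "real p / 3^(k+j) \<in> ivl (k+j) p" by (rule ivl_self)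
  ultimately show "p \<in> {p \<in> CP (k + j). real p / 3^(k+j) \<in> ivl k q}"
    using ivl_nest[OF r(1), of k q] r by auto
qed

lemma desc1_card:
  assumes "q \<in> CP k"
  shows "card {p \<in> CP (k + j). real p / 3^(k+j) \<in> ivl k q} = 2^j"
  unfolding desc1[OF assms] by (subst card_image) (auto simp: inj_on_def CP_card)



lemma card_nat_window:
  fixes u H :: real
  assumes "H \<ge> 0" "Q \<subseteq> {q::nat. \<bar>real q - u\<bar> \<le> H}"
  shows "real (card Q) \<le> 2 * H + 1"
proof -
  have sub: "{q::nat. \<bar>real q - u\<bar> \<le> H} \<subseteq> nat ` {\<lceil>u - H\<rceil>..\<lfloor>u + H\<rfloor>}"
  proof
    fix q :: nat assume "q \<in> {q::nat. \<bar>real q - u\<bar> \<le> H}"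
    then have "u - H \<le> real q" "real q \<le> u + H" by auto
    then have "int q \<in> {\<lceil>u - H\<rceil>..\<lfloor>u + H\<rfloor>}"
      by (auto simp: ceiling_le_iff le_floor_iff)
    then show "q \<in> nat ` {\<lceil>u - H\<rceil>..\<lfloor>u + H\<rfloor>}" by (auto intro!: image_eqI[where x="int q"])
  qed
  have "card Q \<le> card (nat ` {\<lceil>u - H\<rceil>..\<lfloor>u + H\<rfloor>})"
    by (rule card_mono) (use sub assms(2) in auto)
  also have "\<dots> \<le> card {\<lceil>u - H\<rceil>..\<lfloor>u + H\<rfloor>}" by (rule card_image_le) auto
  also have "\<dots> = nat (\<lfloor>u + H\<rfloor> + 1 - \<lceil>u - H\<rceil>)" by simp
  finally have "real (card Q) \<le> real (nat (\<lfloor>u + H\<rfloor> + 1 - \<lceil>u - H\<rceil>))"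
    by linarith
  also have "\<dots> \<le> 2 * H + 1"
  proof -
    have "real_of_int \<lfloor>u + H\<rfloor> \<le> u + H" "u - H \<le> real_of_int \<lceil>u - H\<rceil>" by linarith+
    moreover have mx: "real (nat z) \<le> max 0 (real_of_int z)" for z by auto
    moreover have "real_of_int (\<lfloor>u + H\<rfloor> + 1 - \<lceil>u - H\<rceil>) = real_of_int \<lfloor>u + H\<rfloor> + 1 - real_of_int \<lceil>u - H\<rceil>" by simp
    ultimately have "max 0 (real_of_int (\<lfloor>u + H\<rfloor> + 1 - \<lceil>u - H\<rceil>)) \<le> 2 * H + 1"
      using assms by (intro max.boundedI) linarith+
    then show ?thesis using mx order_trans by blast
  qed
  finally show ?thesis .
qed

lemma CP_window:
  fixes c h :: real
  assumes "h \<ge> 0"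
  shows "real (card {v \<in> CP (n + j). \<bar>real v - c\<bar> \<le> h * 3^j}) \<le> (2 * h + 3) * 2^j"
proof -
  define Q where "Q = {q \<in> CP n. \<bar>real q - c / 3^j\<bar> \<le> h + 1}"
  have sub: "{v \<in> CP (n + j). \<bar>real v - c\<bar> \<le> h * 3^j} \<subseteq> (\<Union>q\<in>Q. (\<lambda>r. 3^j * q + r) ` CP j)"
  proof
    fix v assume v: "v \<in> {v \<in> CP (n + j). \<bar>real v - c\<bar> \<le> h * 3^j}"
    obtain q r where qr: "q \<in> CP n" "r \<in> CP j" "v = 3^j * q + r"
      using CP_decomp[of n j] v by blast
    have "r < 3^j" using CP_less qr by blast
    then have "real r \<le> real (3^j)" by simp
    then have r: "real r \<le> 3^j" by simp
    have "\<bar>real v - c\<bar> \<le> h * 3^j" using v by auto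
    moreover have "real v = 3^j * real q + real r" using qr by simp
    ultimately have "\<bar>3^j * real q - c\<bar> \<le> h * 3^j + 3^j"
      using r of_nat_0_le_iff[of r] unfolding abs_le_iff by linarith
    then have "\<bar>3^j * real q - c\<bar> \<le> (h + 1) * 3^j" by (simp add: algebra_simps)
    moreover have "real q - c / 3^j = (3^j * real q - c) / 3^j" by (simp add: field_simps)
    ultimately have "\<bar>real q - c / 3^j\<bar> \<le> h + 1"
      by (simp add: abs_divide pos_divide_le_eq)
    then have "q \<in> Q" using qr Q_def by auto
    then show "v \<in> (\<Union>q\<in>Q. (\<lambda>r. 3^j * q + r) ` CP j)" using qr by blast
  qed
  have fQ: "finite Q" using CP_finite Q_def by auto
  have "card {v \<in> CP (n + j). \<bar>real v - c\<bar> \<le> h * 3^j} \<le> card (\<Union>q\<in>Q. (\<lambda>r. 3^j * q + r) ` CP j)"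
    by (rule card_mono[OF _ sub]) (use fQ CP_finite in auto)
  also have "\<dots> \<le> (\<Sum>q\<in>Q. card ((\<lambda>r. 3^j * q + r) ` CP j))" by (rule card_UN_le[OF fQ])
  also have "\<dots> \<le> (\<Sum>q\<in>Q. 2^j)"
  proof (rule sum_mono)
    fix q show "card ((\<lambda>r. 3^j * q + r) ` CP j) \<le> 2^j"
      using card_image_le[OF CP_finite, of "\<lambda>r. 3^j * q + r" j] CP_card[of j] by simp
  qed
  also have "\<dots> = card Q * 2^j" by simp
  finally have 1: "real (card {v \<in> CP (n + j). \<bar>real v - c\<bar> \<le> h * 3^j}) \<le> real (card Q) * 2^j"
    by (metis of_nat_mono of_nat_mult of_nat_numeral of_nat_power)
  have "Q \<subseteq> {q::nat. \<bar>real q - c / 3^j\<bar> \<le> h + 1}" using Q_def by auto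
  then have "real (card Q) \<le> 2 * (h + 1) + 1" using card_nat_window[of "h+1" Q "c/3^j"] assms by linarith
  then have "real (card Q) * 2^j \<le> (2 * h + 3) * 2^j" by (intro mult_right_mono) auto
  then show ?thesis using 1 by linarith
qed



definition PP :: "nat \<Rightarrow> ('n::finite \<Rightarrow> nat) set" where
  "PP m = {p. \<forall>i. p i \<in> CP m}"

definition cube :: "nat \<Rightarrow> ('n::finite \<Rightarrow> nat) \<Rightarrow> (real^'n) set" where
  "cube m p = {x. \<forall>i. x$i \<in> ivl m (p i)}"

definition corner :: "nat \<Rightarrow> ('n::finite \<Rightarrow> nat) \<Rightarrow> real^'n" where
  "corner m p = (\<chi> i. real (p i) / 3^m)"

lemma card_funs:
  assumes "\<And>i. finite (A i)"
  shows "card {p :: 'n::finite \<Rightarrow> 'b. \<forall>i. p i \<in> A i} = (\<Prod>i\<in>UNIV. card (A i))"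
    and "finite {p :: 'n::finite \<Rightarrow> 'b. \<forall>i. p i \<in> A i}"
proof -
  have e: "{p :: 'n::finite \<Rightarrow> 'b. \<forall>i. p i \<in> A i} = PiE UNIV A"
    by (auto simp: PiE_UNIV_domain Pi_def)
  show "card {p :: 'n::finite \<Rightarrow> 'b. \<forall>i. p i \<in> A i} = (\<Prod>i\<in>UNIV. card (A i))"
    unfolding e by (rule card_PiE) simp
  show "finite {p :: 'n::finite \<Rightarrow> 'b. \<forall>i. p i \<in> A i}"
    unfolding e by (rule finite_PiE) (auto simp: assms)
qed

lemma PP_finite: "finite (PP m)"
  unfolding PP_def by (rule card_funs(2)) (rule CP_finite)

lemma PP_card: "card (PP m :: ('n::finite \<Rightarrow> nat) set) = 2^(m * CARD('n))"
proof -
  have "card (PP m :: ('n::finite \<Rightarrow> nat) set) = (\<Prod>i\<in>(UNIV::'n set). card (CP m))"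
    unfolding PP_def by (rule card_funs(1)) (rule CP_finite)
  also have "\<dots> = (2^m)^CARD('n)" by (simp add: CP_card)
  finally show ?thesis by (simp add: power_mult)
qed

lemma cube_cbox: "cube m p = cbox (\<chi> i. real (p i) / 3^m) (\<chi> i. (real (p i) + 1) / 3^m)"
  by (auto simp: cube_def mem_box_cart ivl_mem)

lemma cube_bounded: "bounded (cube m p)"
  unfolding cube_cbox by (rule bounded_cbox)

lemma cube_diam: "diameter (cube m p :: (real^'n::finite) set) \<le> real CARD('n) / 3^m"
proof (rule diameter_le)
  show "cube m p \<noteq> {} \<or> 0 \<le> real CARD('n) / 3 ^ m" by simp
  fix x y :: "real^'n" assume xy: "x \<in> cube m p" "y \<in> cube m p"
  have "norm (x - y) \<le> (\<Sum>i\<in>UNIV. \<bar>(x - y)$i\<bar>)" by (rule norm_le_l1_cart)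
  also have "\<dots> \<le> (\<Sum>i\<in>(UNIV::'n set). 1 / 3^m)"
  proof (rule sum_mono)
    fix i
    have "x$i \<in> ivl m (p i)" "y$i \<in> ivl m (p i)" using xy by (auto simp: cube_def)
    then have "\<bar>x$i - y$i\<bar> \<le> 1/3^m" by (auto simp: ivl_mem abs_le_iff field_simps)
    then show "\<bar>(x - y)$i\<bar> \<le> 1/3^m" by simp
  qed
  also have "\<dots> = real CARD('n) / 3^m" by simp
  finally show "norm (x - y) \<le> real CARD('n) / 3^m" .
qed

lemma dust_iff: "x \<in> cantor_dust \<longleftrightarrow> (\<forall>i. x$i \<in> cantor_set)"
  by (simp add: cantor_dust_def)

lemma dust_in_cube:
  assumes "x \<in> cantor_dust"
  shows "\<exists>p\<in>PP m. x \<in> cube m p"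
proof -
  have "\<forall>i. \<exists>q. q \<in> CP m \<and> x$i \<in> ivl m q" using assms by (auto simp: dust_iff cantor_set_iff)
  then obtain p where "\<forall>i. p i \<in> CP m \<and> x$i \<in> ivl m (p i)" by metis
  then show ?thesis by (auto simp: PP_def cube_def)
qed

lemma corner_in:
  assumes "p \<in> PP m"
  shows "corner m p \<in> cantor_dust" "corner m p \<in> cube m p"
  using assms corner_in_cantor ivl_self by (auto simp: corner_def PP_def dust_iff cube_def)

lemma cube_unique:
  assumes "p \<in> PP m" "q \<in> PP m" "x \<in> cube m p" "x \<in> cube m q"
  shows "p = q"
proof
  fix i show "p i = q i"
    using assms ivl_unique[of "p i" m "q i" "x$i"] by (auto simp: PP_def cube_def)
qed

lemma cantor_closed: "closed cantor_set"
proof -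
  have "closed (cantor_stage m)" for m
    unfolding stage_eq ivl_def by (rule closed_UN) (auto simp: CP_finite)
  then show ?thesis unfolding cantor_set_def by auto
qed

lemma dust_closed: "closed cantor_dust"
proof -
  have e: "cantor_dust = (\<Inter>i. (\<lambda>x. x $ i) -` cantor_set)" by (auto simp: dust_iff)
  show ?thesis unfolding e by (intro closed_INT ballI closed_vimage_vec_nth cantor_closed)
qed

lemma PP0: "PP 0 = {\<lambda>_. 0}"
  by (auto simp: PP_def)

lemma dust_sub_cube0: "cantor_dust \<subseteq> cube 0 (\<lambda>_. 0)"
proof
  fix x :: "real^'n" assume "x \<in> cantor_dust"
  then obtain p where "p \<in> PP 0" "x \<in> cube 0 p" using dust_in_cube by blast
  moreover from \<open>p \<in> PP 0\<close> have "p = (\<lambda>_. 0)" by (simp add: PP0)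
  ultimately show "x \<in> cube 0 (\<lambda>_. 0)" by simp
qed

lemma dust_compact_part:
  "compact (cantor_dust \<inter> (\<Union>p\<in>F. cube m p))" if "finite F"
proof -
  have "closed (\<Union>p\<in>F. cube m p)" using that unfolding cube_cbox by (auto intro: closed_UN)
  moreover have "bounded (cantor_dust :: (real^'n) set)"
    using dust_sub_cube0 cube_bounded bounded_subset by blast
  ultimately show ?thesis using dust_closed
    by (meson bounded_Int closed_Int compact_eq_bounded_closed)
qed

lemma cube_open_nbhd:
  assumes "q \<in> PP k"
  defines "OB \<equiv> box (\<chi> i. real (q i) / 3^k - 1 / (2 * 3^k)) (\<chi> i. (real (q i) + 1) / 3^k + 1 / (2*3^k))"
  shows "open OB" "cube k q \<subseteq> OB" "OB \<inter> cantor_dust \<subseteq> cube k q"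
proof -
  show "open OB" unfolding OB_def by (rule open_box)
  show "cube k q \<subseteq> OB"
    unfolding OB_def by (auto simp: cube_def mem_box_cart ivl_mem) (smt (verit) divide_pos_pos zero_less_power)+
  show "OB \<inter> cantor_dust \<subseteq> cube k q"
  proof
    fix x assume x: "x \<in> OB \<inter> cantor_dust"
    obtain p where p: "p \<in> PP k" "x \<in> cube k p" using x dust_in_cube by blast
    have "p i = q i" for i
    proof (rule ccontr)
      assume ne: "p i \<noteq> q i"
      have "x$i \<in> ivl k (p i)" using p by (auto simp: cube_def)
      from ivl_far[OF _ _ ne this] p assms(1)
      have "x$i \<le> real (q i) / 3^k - 1/3^k \<or> x$i \<ge> (real (q i) + 1) / 3^k + 1/3^k"
        by (auto simp: PP_def)
      moreover have "real (q i) / 3^k - 1 / (2 * 3^k) < x$i" "x$i < (real (q i) + 1) / 3^k + 1 / (2*3^k)"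
        using x unfolding OB_def by (auto simp: mem_box_cart)
      moreover have "1 / (2 * 3^k) < (1::real) / 3^k" by (simp add: field_simps)
      ultimately show False by linarith
    qed
    then show "x \<in> cube k q" using p by (metis ext)
  qed
qed

lemma one_cube:
  assumes "bounded U" "x0 \<in> U \<inter> cantor_dust" "k = 0 \<or> diameter U < 1/3^k"
  shows "\<exists>q\<in>PP k. U \<inter> cantor_dust \<subseteq> cube k (q :: 'n::finite \<Rightarrow> nat)"
  using assms(3)
proof
  assume "k = 0" then show ?thesis using dust_sub_cube0 PP0 by blast
next
  assume dk: "diameter U < 1/3^k"
  obtain q where q: "q \<in> PP k" "x0 \<in> cube k q" using assms(2) dust_in_cube by blast
  have "U \<inter> cantor_dust \<subseteq> cube k q"
  proof
    fix x assume x: "x \<in> U \<inter> cantor_dust"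
    obtain p where p: "p \<in> PP k" "x \<in> cube k p" using x dust_in_cube by blast
    have "p i = q i" for i
    proof (rule ccontr)
      assume ne: "p i \<noteq> q i"
      have "x$i \<in> ivl k (p i)" using p by (auto simp: cube_def)
      from ivl_far[OF _ _ ne this] p q
      have "x$i \<le> real (q i) / 3^k - 1/3^k \<or> x$i \<ge> (real (q i) + 1) / 3^k + 1/3^k"
        by (auto simp: PP_def)
      moreover have "x0$i \<in> ivl k (q i)" using q by (auto simp: cube_def)
      moreover have "\<bar>x$i - x0$i\<bar> \<le> dist x x0"
        using component_le_norm_cart[of "x - x0" i] by (simp add: dist_norm)
      moreover have "dist x x0 \<le> diameter U" using diameter_bounded_bound[OF assms(1)] x assms(2) by auto
      ultimately show False using dk by (auto simp: ivl_mem abs_le_iff)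
    qed
    then show "x \<in> cube k q" using p by (metis ext)
  qed
  then show ?thesis using q by blast
qed

lemma desc_card:
  fixes q :: "'n::finite \<Rightarrow> nat"
  assumes "q \<in> PP k"
  shows "card {p \<in> PP (k + j). corner (k + j) p \<in> cube k q} = 2^(j * CARD('n))"
proof -
  have e: "{p \<in> PP (k + j). corner (k + j) p \<in> cube k (q :: 'n \<Rightarrow> nat)}
       = {p. \<forall>i. p i \<in> {v \<in> CP (k + j). real v / 3^(k+j) \<in> ivl k (q i)}}"
    by (auto simp: PP_def cube_def corner_def)
  have "card {p \<in> PP (k + j). corner (k + j) p \<in> cube k q}
     = (\<Prod>i\<in>(UNIV::'n set). card {v \<in> CP (k + j). real v / 3^(k+j) \<in> ivl k (q i)})"
    unfolding e by (rule card_funs(1)) (simp add: CP_finite)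
  also have "\<dots> = (\<Prod>i\<in>(UNIV::'n set). 2^j)"
    using desc1_card assms by (simp add: PP_def)
  finally show ?thesis by (simp add: power_mult)
qed



lemma hgauge_empty[simp]: "hgauge s {} = 0" by (simp add: hgauge_def)

lemma hgauge_le:
  assumes "s > 0" "diameter U \<le> D" "bounded U"
  shows "hgauge s U \<le> ennreal (D powr s)"
proof -
  have "diameter U \<ge> 0" using assms(3) by (rule diameter_ge_0)
  show ?thesis
    using assms \<open>diameter U \<ge> 0\<close> by (auto simp: hgauge_def intro!: ennreal_leI powr_mono2)
qed

lemma hausdorff_pre_finite_cover:
  assumes "finite B" "\<delta> > 0" "A \<subseteq> (\<Union>p\<in>B. f p)" "\<And>p. p \<in> B \<Longrightarrow> bounded (f p) \<and> diameter (f p) \<le> \<delta>"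
  shows "hausdorff_pre s \<delta> A \<le> (\<Sum>p\<in>B. hgauge s (f p))"
proof -
  obtain h where h: "bij_betw h {0..<card B} B" using ex_bij_betw_nat_finite[OF assms(1)] by blast
  define U where "U i = (if i < card B then f (h i) else {})" for i
  have cov: "A \<subseteq> (\<Union>i. U i)"
  proof
    fix x assume "x \<in> A"
    then obtain p where p: "p \<in> B" "x \<in> f p" using assms(3) by blast
    then obtain i where "i \<in> {0..<card B}" "h i = p" using h unfolding bij_betw_def by (metis imageE)
    then show "x \<in> (\<Union>i. U i)" using p U_def by auto
  qed
  have hB: "h i \<in> B" if "i < card B" for i using h that by (auto simp: bij_betw_def)
  have bd: "\<forall>i. bounded (U i) \<and> diameter (U i) \<le> \<delta>"
    using assms(2,4) hB by (auto simp: U_def)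
  have "hausdorff_pre s \<delta> A \<le> (\<Sum>i. hgauge s (U i))"
    unfolding hausdorff_pre_def by (rule INF_lower) (use cov bd in auto)
  also have "(\<Sum>i. hgauge s (U i)) = (\<Sum>i\<in>{0..<card B}. hgauge s (U i))"
    by (rule suminf_finite) (auto simp: U_def)
  also have "\<dots> = (\<Sum>i\<in>{0..<card B}. hgauge s (f (h i)))"
    by (rule sum.cong) (auto simp: U_def)
  also have "\<dots> = (\<Sum>p\<in>B. hgauge s (f p))"
    by (rule sum.reindex_bij_betw[OF h])
  finally show ?thesis .
qed

lemma hausdorff_pre_mono:
  assumes "A \<subseteq> B"
  shows "hausdorff_pre s \<delta> A \<le> hausdorff_pre s \<delta> B"
  unfolding hausdorff_pre_def by (rule INF_superset_mono) (use assms in auto)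

lemma hausdorff_measure_mono:
  assumes "A \<subseteq> B"
  shows "hausdorff_measure s A \<le> hausdorff_measure s B"
  unfolding hausdorff_measure_def by (rule SUP_mono) (use hausdorff_pre_mono[OF assms] in blast)

lemma hausdorff_measure_le:
  assumes "\<And>\<delta>. \<delta> > 0 \<Longrightarrow> hausdorff_pre s \<delta> A \<le> c"
  shows "hausdorff_measure s A \<le> c"
  unfolding hausdorff_measure_def by (rule SUP_least) (use assms in auto)

lemma hausdorff_measure_ge:
  assumes "\<delta> > 0"
  shows "hausdorff_pre s \<delta> A \<le> hausdorff_measure s A"
  unfolding hausdorff_measure_def by (rule SUP_upper) (use assms in auto)

definition s0 :: "'n::finite itself \<Rightarrow> real" where
  "s0 _ = real CARD('n) * ln 2 / ln 3"

lemma three_powr_s0: "3 powr (s0 TYPE('n::finite)) = 2 ^ CARD('n)"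
proof -
  have "3 powr (s0 TYPE('n)) = exp (real CARD('n) * ln 2)"
    by (simp add: powr_def s0_def)
  also have "\<dots> = 2 ^ CARD('n)" by (simp add: exp_of_nat_mult)
  finally show ?thesis .
qed

lemma s0_pos: "s0 TYPE('n::finite) > 0"
  by (simp add: s0_def)

lemma cube_gauge:
  fixes p :: "'n::finite \<Rightarrow> nat"
  assumes "t > 0"
  shows "hgauge t (cube m p) \<le> ennreal ((real CARD('n) / 3^m) powr t)"
  by (rule hgauge_le[OF assms cube_diam cube_bounded])

lemma cube_gauge_s0:
  fixes p :: "'n::finite \<Rightarrow> nat"
  shows "hgauge (s0 TYPE('n)) (cube m p) \<le> ennreal (real CARD('n) powr (s0 TYPE('n)) / 2^(m * CARD('n)))"
proof -
  have "(real CARD('n) / 3^m) powr (s0 TYPE('n)) = real CARD('n) powr (s0 TYPE('n)) / (3 powr (s0 TYPE('n)))^m"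
    by (simp add: powr_divide powr_realpow[symmetric] powr_powr mult.commute)
  also have "\<dots> = real CARD('n) powr (s0 TYPE('n)) / 2^(m * CARD('n))"
    by (simp add: three_powr_s0 power_mult[symmetric] mult.commute)
  moreover have "hgauge (s0 TYPE('n)) (cube m p) \<le> ennreal ((real CARD('n) / 3^m) powr (s0 TYPE('n)))"
    by (rule cube_gauge) (rule s0_pos)
  ultimately show ?thesis by simp
qed



lemma three_scale:
  fixes y :: real
  assumes "0 < y" "y < 1"
  shows "\<exists>k. 1/3^(Suc k) \<le> y \<and> y < 1/3^k"
proof -
  obtain n where n: "(1/3::real)^n < y" using real_arch_pow_inv[OF assms(1), of "1/3"] by auto
  have "(1/3::real)^(Suc n) \<le> (1/3)^n" by (rule power_decreasing) auto
  then have Pn: "1/3^(Suc n) \<le> y" using n by (simp add: power_one_over)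
  define k where "k = (LEAST n. 1/3^(Suc n) \<le> y)"
  have Pk: "1/3^(Suc k) \<le> y" unfolding k_def by (rule LeastI[of _ n]) (rule Pn)
  have "y < 1/3^k"
  proof (cases k)
    case 0 then show ?thesis using assms by simp
  next
    case (Suc k')
    have "\<not> 1/3^(Suc k') \<le> y" using not_less_Least[of k' "\<lambda>n. 1/3^(Suc n) \<le> y"] Suc k_def by auto
    then show ?thesis using Suc by simp
  qed
  then show ?thesis using Pk by blast
qed

lemma pow2_le: "(2::real)^k \<le> 2^(k * CARD('n::finite))"
proof -
  have "k \<le> k * CARD('n)" by simp
  then show ?thesis by (rule power_increasing) auto
qed

lemma scale_bound:
  fixes y t :: real
  assumes "0 \<le> t" "t \<le> s0 TYPE('n::finite)" "1/3^k \<le> y"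
  shows "1 / 2^(k * CARD('n)) \<le> y powr t"
proof -
  have "(1/3^k) powr t \<le> y powr t" using assms by (intro powr_mono2) auto
  moreover have "(1/3^k :: real) powr t = 1 / 3 powr (real k * t)"
    by (simp add: powr_divide powr_realpow[symmetric] powr_powr)
  moreover have "3 powr (real k * t) \<le> 3 powr (real k * s0 TYPE('n))"
    using assms by (intro powr_mono mult_left_mono) auto
  moreover have "3 powr (real k * s0 TYPE('n)) = 2^(k * CARD('n))"
  proof -
    have "3 powr (real k * s0 TYPE('n)) = (3 powr s0 TYPE('n)) powr real k"
      by (simp add: powr_powr mult.commute)
    also have "\<dots> = (2 ^ CARD('n)) ^ k" by (simp add: three_powr_s0 powr_realpow)
    finally show ?thesis by (simp add: power_mult[symmetric] mult.commute)
  qed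
  ultimately have "1 / 2^(k * CARD('n)) \<le> (1/3^k) powr t"
    by (simp add: frac_le)
  then show ?thesis using \<open>(1/3^k) powr t \<le> y powr t\<close> by linarith
qed

definition hgr :: "real \<Rightarrow> 'a::metric_space set \<Rightarrow> real" where
  "hgr s U = (if U = {} then 0 else if diameter U = 0 then (if s = 0 then 1 else 0)
                 else diameter U powr s)"

lemma hgauge_hgr: "hgauge s U = ennreal (hgr s U)"
  by (simp add: hgauge_def hgr_def)

lemma hgr_nonneg: "hgr s U \<ge> 0"
  by (simp add: hgr_def)

lemma choose_k:
  fixes U :: "(real^'n::finite) set"
  assumes "bounded U" "x0 \<in> U \<inter> cantor_dust" "0 \<le> t" "t \<le> s0 TYPE('n)" "\<zeta> > 0"
  shows "\<exists>k. \<exists>q\<in>PP k. U \<inter> cantor_dust \<subseteq> cube k q \<and> 1 / 2^(k * CARD('n)) \<le> 3 powr t * hgr t U + \<zeta>"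
proof -
  have Une: "U \<noteq> {}" using assms(2) by auto
  define D where "D = diameter U"
  have D0: "D \<ge> 0" unfolding D_def using assms(1) by (rule diameter_ge_0)
  have hpos: "0 \<le> 3 powr t * hgr t U" by (simp add: hgr_nonneg)
  show ?thesis
  proof (cases "D = 0")
    case True
    show ?thesis
    proof (cases "t = 0")
      case True
      then have "hgr t U = 1" using \<open>D = 0\<close> Une by (simp add: hgr_def D_def)
      moreover obtain q where "q \<in> PP 0" "U \<inter> cantor_dust \<subseteq> cube 0 (q :: 'n \<Rightarrow> nat)"
        using one_cube[OF assms(1,2)] by blast
      ultimately show ?thesis using True assms(5) by (intro exI[of _ 0]) auto
    next
      case False
      obtain k where k: "(1/2::real)^k < \<zeta>" using real_arch_pow_inv[OF assms(5), of "1/2"] by auto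
      have "diameter U < 1/3^k" using \<open>D = 0\<close> D_def by simp
      then obtain q where "q \<in> PP k" "U \<inter> cantor_dust \<subseteq> cube k (q :: 'n \<Rightarrow> nat)"
        using one_cube[OF assms(1,2)] by blast
      moreover have "1 / 2^(k * CARD('n)) \<le> (1/2::real)^k"
        using pow2_le[of k] by (simp add: power_one_over frac_le)
      ultimately show ?thesis using k hpos by (intro exI[of _ k]) force
    qed
  next
    case False
    then have Dp: "D > 0" using D0 by simp
    have hg: "hgr t U = D powr t" using False Une by (simp add: hgr_def D_def)
    obtain k where k: "(k = 0 \<or> D < 1/3^k)" "1/3^k \<le> 3 * D"
    proof (cases "D < 1/3")
      case True
      obtain k where "1/3^(Suc k) \<le> D" "D < 1/3^k" using three_scale[OF Dp] True by auto
      then show ?thesis using that[of k] by auto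
    next
      case False then show ?thesis using that[of 0] by auto
    qed
    obtain q where "q \<in> PP k" "U \<inter> cantor_dust \<subseteq> cube k (q :: 'n \<Rightarrow> nat)"
      using one_cube[OF assms(1,2)] k(1) D_def by blast
    moreover have "1 / 2^(k * CARD('n)) \<le> (3 * D) powr t"
      by (rule scale_bound[OF assms(3,4) k(2)])
    moreover have "(3 * D) powr t = 3 powr t * hgr t U" using hg by (simp add: powr_mult)
    ultimately show ?thesis using assms(5) by (intro exI[of _ k]) force
  qed
qed



lemma PP_finite_Collect: "finite {p \<in> PP m. P p}"
  by (rule finite_subset[OF _ PP_finite]) auto

lemma LB_real:
  fixes F :: "('n::finite \<Rightarrow> nat) set" and U :: "nat \<Rightarrow> (real^'n) set"
  assumes F: "F \<subseteq> PP n" and t: "0 \<le> t" "t \<le> s0 TYPE('n)"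
    and cov: "cantor_dust \<inter> (\<Union>p\<in>F. cube n p) \<subseteq> (\<Union>i. U i)"
    and bnd: "\<And>i. bounded (U i)"
    and summ: "summable (\<lambda>i. hgr t (U i))"
    and eta: "\<eta> > 0"
  shows "real (card F) / 2^(n * CARD('n)) \<le> 3 powr t * (\<Sum>i. hgr t (U i)) + \<eta>"
proof -
  define d where "d = CARD('n)"
  define E where "E = cantor_dust \<inter> (\<Union>p\<in>F. cube n p)"
  define J where "J = {i. U i \<inter> E \<noteq> {}}"
  define \<zeta> where "\<zeta> i = \<eta> / 2 * (1/2)^i" for i :: nat
  have "\<forall>i. \<exists>k q. i \<in> J \<longrightarrow> (q \<in> PP k \<and> U i \<inter> cantor_dust \<subseteq> cube k q \<and>
           1 / 2^(k * d) \<le> 3 powr t * hgr t (U i) + \<zeta> i)"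
  proof
    fix i
    show "\<exists>k q. i \<in> J \<longrightarrow> (q \<in> PP k \<and> U i \<inter> cantor_dust \<subseteq> cube k q \<and>
           1 / 2^(k * d) \<le> 3 powr t * hgr t (U i) + \<zeta> i)"
    proof (cases "i \<in> J")
      case True
      then obtain x0 where "x0 \<in> U i \<inter> cantor_dust" unfolding J_def E_def by auto
      moreover have "\<zeta> i > 0" using eta by (simp add: \<zeta>_def)
      ultimately show ?thesis using choose_k[OF bnd _ t] unfolding d_def by blast
    qed auto
  qed
  then obtain kk qq where kq: "\<And>i. i \<in> J \<Longrightarrow> qq i \<in> PP (kk i) \<and> U i \<inter> cantor_dust \<subseteq> cube (kk i) (qq i) \<and>
           1 / 2^(kk i * d) \<le> 3 powr t * hgr t (U i) + \<zeta> i"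
    by metis
  define OB where "OB i = (if i \<in> J then box (\<chi> j. real (qq i j) / 3^(kk i) - 1 / (2 * 3^(kk i)))
        (\<chi> j. (real (qq i j) + 1) / 3^(kk i) + 1 / (2*3^(kk i))) else {})" for i
  have OBp: "open (OB i) \<and> (i \<in> J \<longrightarrow> cube (kk i) (qq i) \<subseteq> OB i \<and> OB i \<inter> cantor_dust \<subseteq> cube (kk i) (qq i))"
    for i
  proof (cases "i \<in> J")
    case True
    then show ?thesis using cube_open_nbhd[of "qq i" "kk i"] kq[OF True] unfolding OB_def by simp
  qed (simp add: OB_def)
  have EO: "E \<subseteq> (\<Union>i\<in>UNIV. OB i)"
  proof
    fix x assume x: "x \<in> E"
    then obtain i where i: "x \<in> U i" using cov E_def by blast
    then have "i \<in> J" using x J_def by auto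
    then have "x \<in> cube (kk i) (qq i)" using kq[of i] x i E_def by auto
    then show "x \<in> (\<Union>i\<in>UNIV. OB i)" using OBp[of i] \<open>i \<in> J\<close> by auto
  qed
  have fF: "finite F" using F PP_finite finite_subset by blast
  have cE: "compact E" unfolding E_def by (rule dust_compact_part[OF fF])
  obtain C' where C': "finite C'" "E \<subseteq> (\<Union>i\<in>C'. OB i)"
    using compactE_image[OF cE _ EO] OBp by metis
  define I where "I = C' \<inter> J"
  have fI: "finite I" using C' I_def by auto
  have EI: "E \<subseteq> (\<Union>i\<in>I. cube (kk i) (qq i))"
  proof
    fix x assume x: "x \<in> E"
    then obtain i where i: "i \<in> C'" "x \<in> OB i" using C' by blast
    then have "i \<in> J" by (auto simp: OB_def split: if_splits)
    then have "x \<in> cube (kk i) (qq i)" using OBp[of i] x i E_def by auto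
    then show "x \<in> (\<Union>i\<in>I. cube (kk i) (qq i))" using i \<open>i \<in> J\<close> I_def by auto
  qed
  define j where "j = sum kk I"
  define m where "m = n + j"
  have kkle: "kk i \<le> m" if "i \<in> I" for i
    using member_le_sum[of i I kk] that fI unfolding m_def j_def by auto
  define G where "G = {p \<in> PP m. corner m p \<in> E}"
  have fG: "finite G" unfolding G_def using PP_finite[of m] by (rule finite_subset[rotated]) auto
  define Dq where "Dq q = {p \<in> PP (n + j). corner (n + j) p \<in> cube n q}" for q :: "'n \<Rightarrow> nat"
  have DqG: "(\<Union>q\<in>F. Dq q) \<subseteq> G"
    using corner_in(1) unfolding Dq_def G_def E_def m_def by blast
  have Dq_card: "card (Dq q) = 2^(j * d)" if "q \<in> F" for q
    unfolding Dq_def d_def using desc_card[of q n j] that F by auto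
  have Dq_disj: "Dq q \<inter> Dq q' = {}" if "q \<in> F" "q' \<in> F" "q \<noteq> q'" for q q'
    using cube_unique[of q n q'] that F unfolding Dq_def by blast
  have fDq: "finite (Dq q)" for q unfolding Dq_def using PP_finite[of "n + j"] by (rule finite_subset[rotated]) auto
  have "card (\<Union>q\<in>F. Dq q) = (\<Sum>q\<in>F. card (Dq q))"
    by (rule card_UN_disjoint[OF fF]) (use fDq Dq_disj in auto)
  also have "\<dots> = card F * 2^(j * d)" using Dq_card by simp
  finally have c1: "card F * 2^(j * d) \<le> card G"
    using card_mono[OF fG DqG] by simp
  define D' where "D' i = {p \<in> PP (kk i + (m - kk i)). corner (kk i + (m - kk i)) p \<in> cube (kk i) (qq i)}" for i
  have GD: "G \<subseteq> (\<Union>i\<in>I. D' i)"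
  proof
    fix p assume p: "p \<in> G"
    then have "corner m p \<in> E" "p \<in> PP m" using G_def by auto
    then obtain i where i: "i \<in> I" "corner m p \<in> cube (kk i) (qq i)" using EI by blast
    have e: "kk i + (m - kk i) = m" using kkle[OF i(1)] by simp
    have "p \<in> D' i" unfolding D'_def e using i \<open>p \<in> PP m\<close> by auto
    then show "p \<in> (\<Union>i\<in>I. D' i)" using i by auto
  qed
  have D'card: "card (D' i) = 2^((m - kk i) * d)" if "i \<in> I" for i
    unfolding D'_def d_def by (rule desc_card) (use kq that I_def in auto)
  have "card G \<le> card (\<Union>i\<in>I. D' i)"
    by (rule card_mono[OF _ GD]) (use fI PP_finite_Collect D'_def in auto)
  also have "\<dots> \<le> (\<Sum>i\<in>I. card (D' i))" by (rule card_UN_le[OF fI])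
  also have "\<dots> = (\<Sum>i\<in>I. 2^((m - kk i) * d))" using D'card by simp
  finally have c2: "card F * 2^(j * d) \<le> (\<Sum>i\<in>I. 2^((m - kk i) * d))" using c1 by linarith
  then have "real (card F * 2^(j * d)) \<le> real (\<Sum>i\<in>I. 2^((m - kk i) * d))" by (rule of_nat_mono)
  then have c3: "real (card F) * 2^(j * d) \<le> (\<Sum>i\<in>I. (2::real)^((m - kk i) * d))"
    by simp
  have pm: "(2::real)^(m * d) > 0" by simp
  have e1: "real (card F) * 2^(j * d) = (real (card F) / 2^(n * d)) * 2^(m * d)"
    by (simp add: m_def add_mult_distrib power_add field_simps)
  have e2: "(2::real)^((m - kk i) * d) = (1 / 2^(kk i * d)) * 2^(m * d)" if "i \<in> I" for i
  proof -
    have "m = (m - kk i) + kk i" using kkle[OF that] by simp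
    then have "(2::real)^(m * d) = 2^((m - kk i) * d) * 2^(kk i * d)"
      by (metis add_mult_distrib power_add)
    then show ?thesis by simp
  qed
  have "(\<Sum>i\<in>I. (2::real)^((m - kk i) * d)) = (\<Sum>i\<in>I. 1 / 2^(kk i * d)) * 2^(m * d)"
    using e2 by (simp add: sum_distrib_right)
  with c3 e1 have c4: "real (card F) / 2^(n * d) \<le> (\<Sum>i\<in>I. 1 / 2^(kk i * d))"
    using pm by (metis mult_le_cancel_right_pos)
  also have "\<dots> \<le> (\<Sum>i\<in>I. 3 powr t * hgr t (U i) + \<zeta> i)"
    by (rule sum_mono) (use kq I_def in auto)
  also have "\<dots> = 3 powr t * (\<Sum>i\<in>I. hgr t (U i)) + (\<Sum>i\<in>I. \<zeta> i)"
    by (simp add: sum.distrib sum_distrib_left)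
  also have "\<dots> \<le> 3 powr t * (\<Sum>i. hgr t (U i)) + \<eta>"
  proof -
    have "(\<Sum>i\<in>I. hgr t (U i)) \<le> (\<Sum>i. hgr t (U i))"
      by (rule sum_le_suminf[OF summ fI]) (simp add: hgr_nonneg)
    moreover have "(\<Sum>i\<in>I. \<zeta> i) \<le> (\<Sum>i. \<zeta> i)"
      by (rule sum_le_suminf[OF _ fI]) (use eta in \<open>auto simp: \<zeta>_def intro!: summable_mult summable_geometric\<close>)
    moreover have "(\<Sum>i. \<zeta> i) = \<eta>"
    proof -
      have "(\<Sum>i. \<zeta> i) = \<eta> / 2 * (\<Sum>i. (1/2::real)^i)"
        unfolding \<zeta>_def by (rule suminf_mult, rule summable_geometric) simp
      also have "(\<Sum>i. (1/2::real)^i) = 2" using suminf_geometric[of "1/2::real"] by simp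
      finally show ?thesis by simp
    qed
    ultimately show ?thesis
    proof -
      assume a1: "(\<Sum>i\<in>I. hgr t (U i)) \<le> (\<Sum>i. hgr t (U i))" and a2: "sum \<zeta> I \<le> (\<Sum>i. \<zeta> i)"
        and a3: "(\<Sum>i. \<zeta> i) = \<eta>"
      have "3 powr t * (\<Sum>i\<in>I. hgr t (U i)) \<le> 3 powr t * (\<Sum>i. hgr t (U i))"
        using a1 by (rule mult_left_mono) simp
      then show ?thesis using a2 a3 by linarith
    qed
  qed
  finally show ?thesis unfolding d_def .
qed

lemma LB:
  fixes F :: "('n::finite \<Rightarrow> nat) set"
  assumes F: "F \<subseteq> PP n" and t: "0 \<le> t" "t \<le> s0 TYPE('n)"
  shows "ennreal (real (card F) / 2^(n * CARD('n)) / 3 powr t)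
           \<le> hausdorff_pre t \<delta> (cantor_dust \<inter> (\<Union>p\<in>F. cube n p))"
  unfolding hausdorff_pre_def
proof (rule INF_greatest)
  fix U :: "nat \<Rightarrow> (real^'n) set"
  assume "U \<in> {U. cantor_dust \<inter> (\<Union>p\<in>F. cube n p) \<subseteq> (\<Union>i. U i) \<and> (\<forall>i. bounded (U i) \<and> diameter (U i) \<le> \<delta>)}"
  then have cov: "cantor_dust \<inter> (\<Union>p\<in>F. cube n p) \<subseteq> (\<Union>i. U i)" and bnd: "\<And>i. bounded (U i)" by auto
  show "ennreal (real (card F) / 2^(n * CARD('n)) / 3 powr t) \<le> (\<Sum>i. hgauge t (U i))"
  proof (cases "summable (\<lambda>i. hgr t (U i))")
    case False
    then have "(\<Sum>i. ennreal (hgr t (U i))) = top"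
      using summable_suminf_not_top[of "\<lambda>i. hgr t (U i)"] hgr_nonneg by blast
    then show ?thesis by (simp add: hgauge_hgr)
  next
    case True
    have "(\<Sum>i. hgauge t (U i)) = ennreal (\<Sum>i. hgr t (U i))"
      unfolding hgauge_hgr by (rule suminf_ennreal2[OF hgr_nonneg True])
    moreover have "real (card F) / 2^(n * CARD('n)) / 3 powr t \<le> (\<Sum>i. hgr t (U i))"
    proof -
      have "real (card F) / 2^(n * CARD('n)) \<le> 3 powr t * (\<Sum>i. hgr t (U i))"
        by (rule field_le_epsilon) (rule LB_real[OF F t cov bnd True])
      moreover have "3 powr t > 0" by simp
      ultimately show ?thesis using pos_divide_le_eq[of "3 powr t" "real (card F) / 2^(n * CARD('n))" "(\<Sum>i. hgr t (U i))"]
        by (simp add: mult.commute)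
    qed
    ultimately show ?thesis by (simp add: ennreal_leI)
  qed
qed



lemma cover_by_level:
  fixes A :: "(real^'n::finite) set"
  assumes "A \<subseteq> cantor_dust" "B \<subseteq> PP m" "\<And>x. x \<in> A \<Longrightarrow> \<exists>p\<in>B. x \<in> cube m p"
    "\<delta> > 0" "real CARD('n) / 3^m \<le> \<delta>" "t > 0"
  shows "hausdorff_pre t \<delta> A \<le> ennreal (real (card B) * (real CARD('n) / 3^m) powr t)"
proof -
  have fB: "finite B" using assms(2) PP_finite finite_subset by blast
  have "hausdorff_pre t \<delta> A \<le> (\<Sum>p\<in>B. hgauge t (cube m p))"
  proof (rule hausdorff_pre_finite_cover[OF fB assms(4)])
    show "A \<subseteq> (\<Union>p\<in>B. cube m p)" using assms(3) by blast
    fix p :: "'n \<Rightarrow> nat"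
    have "diameter (cube m p) \<le> \<delta>" using cube_diam[of m p] assms(5) by linarith
    then show "bounded (cube m p) \<and> diameter (cube m p) \<le> \<delta>" using cube_bounded by blast
  qed
  also have "\<dots> \<le> (\<Sum>p\<in>B. ennreal ((real CARD('n) / 3^m) powr t))"
    by (rule sum_mono) (rule cube_gauge[OF assms(6)])
  also have "\<dots> = ennreal (real (card B) * (real CARD('n) / 3^m) powr t)"
    by (simp add: ennreal_mult' ennreal_of_nat_eq_real_of_nat)
  finally show ?thesis .
qed

lemma dust_zero:
  assumes "t > s0 TYPE('n::finite)"
  shows "hausdorff_measure t (cantor_dust :: (real^'n) set) = 0"
proof -
  have t0: "t > 0" using assms s0_pos[where 'n='n] by linarith
  define d where "d = real CARD('n)"
  define r where "r = 2^CARD('n) / 3 powr t"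
  have "3 powr s0 TYPE('n) < 3 powr t" using assms by simp
  then have r1: "r < 1" and r0: "r > 0" unfolding r_def using three_powr_s0[where 'n='n] by auto
  have H: "hausdorff_pre t \<delta> (cantor_dust :: (real^'n) set) \<le> 0" if \<delta>: "\<delta> > 0" for \<delta>
  proof (rule ennreal_le_epsilon)
    fix \<eta> :: real assume \<eta>: "\<eta> > 0"
    have dpos: "d powr t > 0" unfolding d_def by simp
    obtain m1 where m1: "r^m1 < \<eta> / d powr t" using real_arch_pow_inv[OF _ r1, of "\<eta> / d powr t"] \<eta> dpos by auto
    obtain m2 where m2: "(1/3::real)^m2 < \<delta> / d" using real_arch_pow_inv[of "\<delta> / d" "1/3"] \<delta> unfolding d_def by auto
    define m where "m = m1 + m2"
    have "r^m \<le> r^m1" unfolding m_def using r0 r1 by (intro power_decreasing) auto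
    have "(1/3::real)^m \<le> (1/3)^m2" unfolding m_def by (intro power_decreasing) auto
    moreover have "d / 3^m = d * (1/3)^m" by (simp add: power_one_over)
    moreover have "d > 0" unfolding d_def by simp
    moreover have "d * (1/3)^m2 < \<delta>" using m2 \<open>d > 0\<close> by (simp add: field_simps)
    moreover have "d * (1/3)^m \<le> d * (1/3)^m2"
      using \<open>(1/3::real)^m \<le> (1/3)^m2\<close> \<open>d > 0\<close> by (intro mult_left_mono) auto
    ultimately have "d / 3^m \<le> \<delta>" by linarith
    have cov: "\<exists>p\<in>PP m. x \<in> cube m p" if "x \<in> cantor_dust" for x :: "real^'n"
      using dust_in_cube that by blast
    have "hausdorff_pre t \<delta> (cantor_dust :: (real^'n) set) \<le> ennreal (real (card (PP m :: ('n \<Rightarrow> nat) set)) * (d / 3^m) powr t)"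
      unfolding d_def by (rule cover_by_level[OF _ _ cov \<delta> _ t0]) (use \<open>d / 3^m \<le> \<delta>\<close> d_def in auto)
    also have "real (card (PP m :: ('n \<Rightarrow> nat) set)) * (d / 3^m) powr t = d powr t * r^m"
    proof -
      have "(d / 3^m) powr t = d powr t / (3 powr t)^m"
        unfolding d_def by (simp add: powr_divide powr_realpow[symmetric] powr_powr mult.commute)
      moreover have "real (card (PP m :: ('n \<Rightarrow> nat) set)) = (2^CARD('n))^m"
        by (simp add: PP_card power_mult[symmetric] mult.commute)
      ultimately show ?thesis unfolding r_def by (simp add: power_divide)
    qed
    also have "d powr t * r^m \<le> \<eta>"
    proof -
      have "d powr t * r^m \<le> d powr t * r^m1" using \<open>r^m \<le> r^m1\<close> dpos by simp
      also have "\<dots> \<le> \<eta>" using m1 dpos by (simp add: field_simps)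
      finally show ?thesis .
    qed
    finally show "hausdorff_pre t \<delta> (cantor_dust :: (real^'n) set) \<le> 0 + ennreal \<eta>"
      by (simp add: ennreal_leI)
  qed
  have "hausdorff_measure t (cantor_dust :: (real^'n) set) \<le> 0"
    by (rule hausdorff_measure_le[OF H])
  then show ?thesis by simp
qed

lemma dust_pos:
  assumes "0 \<le> t" "t \<le> s0 TYPE('n::finite)"
  shows "ennreal (1 / 3 powr t) \<le> hausdorff_measure t (cantor_dust :: (real^'n) set)"
proof -
  have "ennreal (real (card (PP 0 :: ('n \<Rightarrow> nat) set)) / 2^(0 * CARD('n)) / 3 powr t)
        \<le> hausdorff_pre t 1 (cantor_dust \<inter> (\<Union>p\<in>(PP 0 :: ('n \<Rightarrow> nat) set). cube 0 p))"
    by (rule LB[OF _ assms]) simp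
  moreover have "cantor_dust \<inter> (\<Union>p\<in>(PP 0 :: ('n \<Rightarrow> nat) set). cube 0 p) = cantor_dust"
    using dust_sub_cube0 PP0 by auto
  moreover have "hausdorff_pre t 1 (cantor_dust :: (real^'n) set) \<le> hausdorff_measure t (cantor_dust :: (real^'n) set)"
    using hausdorff_measure_ge[of 1 t "cantor_dust :: (real^'n) set"] by simp
  ultimately show ?thesis by (simp add: PP0)
qed

lemma dust_dim: "hausdorff_dim (cantor_dust :: (real^'n::finite) set) = s0 TYPE('n)"
proof -
  have "{t. t \<ge> 0 \<and> hausdorff_measure t (cantor_dust :: (real^'n) set) = 0} = {s0 TYPE('n)<..}"
  proof (intro equalityI subsetI)
    fix t assume t: "t \<in> {t. t \<ge> 0 \<and> hausdorff_measure t (cantor_dust :: (real^'n) set) = 0}"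
    show "t \<in> {s0 TYPE('n)<..}"
    proof (rule ccontr)
      assume "t \<notin> {s0 TYPE('n)<..}"
      then have "t \<le> s0 TYPE('n)" by simp
      have "ennreal (1 / 3 powr t) \<le> hausdorff_measure t (cantor_dust :: (real^'n) set)"
        by (rule dust_pos) (use t \<open>t \<le> s0 TYPE('n)\<close> in auto)
      then have "ennreal (1 / 3 powr t) \<le> 0" using t by auto
      then show False by simp
    qed
  next
    fix t assume "t \<in> {s0 TYPE('n)<..}"
    then show "t \<in> {t. t \<ge> 0 \<and> hausdorff_measure t (cantor_dust :: (real^'n) set) = 0}"
      using dust_zero[of t] s0_pos[where 'n='n] by auto
  qed
  then show ?thesis unfolding hausdorff_dim_def by simp
qed



lemma inner_cart: "(a::real^'n::finite) \<bullet> x = (\<Sum>i\<in>UNIV. a$i * x$i)"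
  by (simp add: inner_vec_def)

lemma window_ineq:
  fixes a x :: "real^'n::finite" and p :: "'n \<Rightarrow> nat"
  assumes x: "x \<in> cube (n + j) p"
    and ax: "\<bar>a \<bullet> x - b\<bar> \<le> real CARD('n) * \<bar>a$i0\<bar> * \<epsilon>"
    and amax: "\<And>i. \<bar>a$i\<bar> \<le> \<bar>a$i0\<bar>" and a0: "a$i0 \<noteq> 0"
    and eps: "\<epsilon> \<le> 1/3^n"
  shows "\<bar>real (p i0) - 3^(n+j) * (b - (\<Sum>i\<in>UNIV. a$i * real ((p(i0 := 0)) i) / 3^(n+j))) / a$i0\<bar>
           \<le> (2 * real CARD('n)) * 3^j"
proof -
  define m where "m = n + j"
  define d where "d = real CARD('n)"
  define A where "A = \<bar>a$i0\<bar>"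
  define C' where "C' = (\<Sum>i\<in>UNIV. a$i * real ((p(i0 := 0)) i) / 3^m)"
  have Apos: "A > 0" using a0 A_def by simp
  have xi: "real (p i) / 3^m \<le> x$i \<and> x$i \<le> (real (p i) + 1) / 3^m" for i
    using x by (auto simp: cube_def ivl_mem m_def)
  have s1: "\<bar>a \<bullet> x - (\<Sum>i\<in>UNIV. a$i * real (p i) / 3^m)\<bar> \<le> d * A / 3^m"
  proof -
    have "a \<bullet> x - (\<Sum>i\<in>UNIV. a$i * real (p i) / 3^m) = (\<Sum>i\<in>UNIV. a$i * (x$i - real (p i) / 3^m))"
      by (simp add: inner_cart sum_subtractf algebra_simps)
    also have "\<bar>\<dots>\<bar> \<le> (\<Sum>i\<in>UNIV. \<bar>a$i * (x$i - real (p i) / 3^m)\<bar>)" by (rule sum_abs)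
    also have "\<dots> \<le> (\<Sum>i\<in>(UNIV::'n set). A * (1 / 3^m))"
    proof (rule sum_mono)
      fix i
      have "(real (p i) + 1) / 3^m = real (p i) / 3^m + 1 / 3^m" by (simp add: add_divide_distrib)
      moreover have "(0::real) < 1 / 3^m" by simp
      ultimately have "\<bar>x$i - real (p i) / 3^m\<bar> \<le> 1 / 3^m" using xi[of i] unfolding abs_le_iff by linarith
      then show "\<bar>a$i * (x$i - real (p i) / 3^m)\<bar> \<le> A * (1 / 3^m)"
        unfolding abs_mult using amax[of i] A_def by (intro mult_mono) auto
    qed
    also have "\<dots> = d * A / 3^m" by (simp add: d_def)
    finally show ?thesis .
  qed
  have s2: "(\<Sum>i\<in>UNIV. a$i * real (p i) / 3^m) = a$i0 * real (p i0) / 3^m + C'"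
  proof -
    have r1: "(\<Sum>i\<in>UNIV. a$i * real (p i) / 3^m) = a$i0 * real (p i0) / 3^m + (\<Sum>i\<in>UNIV - {i0}. a$i * real (p i) / 3^m)"
      by (rule sum.remove) auto
    have r2: "C' = a$i0 * real ((p(i0 := 0)) i0) / 3^m + (\<Sum>i\<in>UNIV - {i0}. a$i * real ((p(i0 := 0)) i) / 3^m)"
      unfolding C'_def by (rule sum.remove) auto
    have r3: "(\<Sum>i\<in>UNIV - {i0}. a$i * real ((p(i0 := 0)) i) / 3^m) = (\<Sum>i\<in>UNIV - {i0}. a$i * real (p i) / 3^m)"
      by (rule sum.cong) auto
    show ?thesis using r1 r2 r3 by simp
  qed
  have s3: "\<bar>a$i0 * real (p i0) / 3^m + C' - b\<bar> \<le> d * A * \<epsilon> + d * A / 3^m"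
    using s1 s2 ax unfolding d_def A_def by linarith
  have e: "real (p i0) - 3^m * (b - C') / a$i0 = (3^m / a$i0) * (a$i0 * real (p i0) / 3^m + C' - b)"
    using a0 by (simp add: field_simps)
  have "\<bar>real (p i0) - 3^m * (b - C') / a$i0\<bar> = (3^m / A) * \<bar>a$i0 * real (p i0) / 3^m + C' - b\<bar>"
    unfolding e abs_mult A_def by simp
  also have "\<dots> \<le> (3^m / A) * (d * A * \<epsilon> + d * A / 3^m)"
    using s3 Apos by (intro mult_left_mono) auto
  also have "\<dots> = d * (3^m * \<epsilon> + 1)" using Apos by (simp add: field_simps)
  also have "\<dots> \<le> d * (3^j + 3^j)"
  proof -
    have "3^m * \<epsilon> \<le> 3^m * (1/3^n)" using eps by (intro mult_left_mono) auto
    also have "\<dots> = 3^j" by (simp add: m_def power_add)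
    finally have "3^m * \<epsilon> + 1 \<le> 3^j + 3^j" using one_le_power[of "3::real" j] by linarith
    then show ?thesis unfolding d_def by (intro mult_left_mono) auto
  qed
  also have "\<dots> = (2 * d) * 3^j" by simp
  finally show ?thesis unfolding m_def d_def C'_def .
qed

lemma cardR:
  fixes i0 :: "'n::finite"
  shows "card {r :: 'n \<Rightarrow> nat. \<forall>i. r i \<in> (if i = i0 then {0} else CP m)} = 2^(m * (CARD('n) - 1))"
proof -
  have "card {r :: 'n \<Rightarrow> nat. \<forall>i. r i \<in> (if i = i0 then {0} else CP m)}
      = (\<Prod>i\<in>UNIV. card (if i = i0 then {0} else CP m))"
    by (rule card_funs(1)) (simp add: CP_finite)
  also have "\<dots> = (\<Prod>i\<in>UNIV. (if i = i0 then 1 else 2^m))"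
    by (rule prod.cong) (auto simp: CP_card)
  also have "\<dots> = (\<Prod>i\<in>UNIV - {i0}. 2^m)"
    by (subst prod.remove[of UNIV i0]) auto
  also have "\<dots> = (2^m)^(CARD('n) - 1)" by (simp add: card_Diff_singleton)
  finally show ?thesis by (simp add: power_mult)
qed

lemma finR: "finite {r :: 'n::finite \<Rightarrow> nat. \<forall>i. r i \<in> (if i = i0 then {0} else CP m)}"
  by (rule card_funs(2)) (simp add: CP_finite)

lemma powr_s0_level:
  "(real CARD('n::finite) / 3^m) powr (s0 TYPE('n)) = real CARD('n) powr (s0 TYPE('n)) / 2^(m * CARD('n))"
proof -
  have "(real CARD('n) / 3^m) powr (s0 TYPE('n)) = real CARD('n) powr (s0 TYPE('n)) / (3 powr (s0 TYPE('n)))^m"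
    by (simp add: powr_divide powr_realpow[symmetric] powr_powr mult.commute)
  also have "\<dots> = real CARD('n) powr (s0 TYPE('n)) / 2^(m * CARD('n))"
    by (simp add: three_powr_s0 power_mult[symmetric] mult.commute)
  finally show ?thesis .
qed

lemma exists_amax:
  fixes a :: "real^'n::finite"
  assumes "a \<noteq> 0"
  obtains i0 where "\<And>i. \<bar>a$i\<bar> \<le> \<bar>a$i0\<bar>" "a$i0 \<noteq> 0"
proof -
  define M where "M = Max (range (\<lambda>i. \<bar>a$i\<bar>))"
  have "M \<in> range (\<lambda>i. \<bar>a$i\<bar>)" unfolding M_def by (rule Max_in) auto
  then obtain i0 where i0: "\<bar>a$i0\<bar> = M" by auto
  have le: "\<bar>a$i\<bar> \<le> \<bar>a$i0\<bar>" for i unfolding i0 M_def by (rule Max_ge) auto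
  obtain k where "a$k \<noteq> 0" using assms by (metis vec_eq_iff zero_index)
  then have "a$i0 \<noteq> 0" using le[of k] by auto
  then show ?thesis using that le by blast
qed

lemma nbhd_upper:
  fixes a :: "real^'n::finite"
  assumes a: "a \<noteq> 0" and eps: "0 < \<epsilon>" "\<epsilon> \<le> 1/3^n"
  shows "hausdorff_measure (s0 TYPE('n)) (open_nbhd {x. a \<bullet> x = b} \<epsilon> \<inter> cantor_dust)
         \<le> ennreal ((4 * real CARD('n) + 3) * real CARD('n) powr s0 TYPE('n) / 2^n)"
proof (rule hausdorff_measure_le)
  fix \<delta> :: real assume \<delta>: "\<delta> > 0"
  define d where "d = real CARD('n)"
  have d1: "d \<ge> 1" unfolding d_def by simp
  obtain i0 where amax: "\<And>i. \<bar>a$i\<bar> \<le> \<bar>a$i0\<bar>" and a0: "a$i0 \<noteq> 0" using exists_amax[OF a] by blast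
  obtain j where j: "(1/3::real)^j < \<delta> / d" using real_arch_pow_inv[of "\<delta> / d" "1/3"] \<delta> d1 by auto
  define m where "m = n + j"
  have dm: "d / 3^m \<le> \<delta>"
  proof -
    have "d / 3^m \<le> d / 3^j" using d1 unfolding m_def by (intro divide_left_mono power_increasing) auto
    also have "d / 3^j = d * (1/3)^j" by (simp add: power_one_over)
    also have "\<dots> < \<delta>" using j d1 by (simp add: field_simps)
    finally show ?thesis by simp
  qed
  define R where "R = {r :: 'n \<Rightarrow> nat. \<forall>i. r i \<in> (if i = i0 then {0} else CP m)}"
  define cc where "cc r = 3^(n+j) * (b - (\<Sum>i\<in>UNIV. a$i * real (r i) / 3^(n+j))) / a$i0" for r :: "'n \<Rightarrow> nat"
  define W where "W r = {v \<in> CP (n + j). \<bar>real v - cc r\<bar> \<le> (2 * d) * 3^j}" for r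
  define B where "B = (\<lambda>(r, v). r(i0 := v)) ` (SIGMA r:R. W r)"
  define A where "A = open_nbhd {x. a \<bullet> x = b} \<epsilon> \<inter> (cantor_dust :: (real^'n) set)"
  have BP: "B \<subseteq> PP m"
    unfolding B_def R_def W_def PP_def m_def by (auto split: if_splits)
  have cov: "\<exists>p\<in>B. x \<in> cube m p" if x: "x \<in> A" for x
  proof -
    obtain p where p: "p \<in> PP m" "x \<in> cube m p" using x A_def dust_in_cube by blast
    obtain y where y: "a \<bullet> y = b" "dist x y < \<epsilon>" using x unfolding A_def open_nbhd_def by auto
    have "\<bar>a \<bullet> x - b\<bar> = \<bar>a \<bullet> (x - y)\<bar>" using y by (simp add: inner_diff_right)
    also have "\<dots> \<le> norm a * norm (x - y)" by (rule Cauchy_Schwarz_ineq2)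
    also have "\<dots> \<le> (d * \<bar>a$i0\<bar>) * \<epsilon>"
    proof (rule mult_mono)
      have "norm a \<le> (\<Sum>i\<in>UNIV. \<bar>a$i\<bar>)" by (rule norm_le_l1_cart)
      also have "\<dots> \<le> (\<Sum>i\<in>(UNIV::'n set). \<bar>a$i0\<bar>)" by (rule sum_mono) (rule amax)
      also have "\<dots> = d * \<bar>a$i0\<bar>" by (simp add: d_def)
      finally show "norm a \<le> d * \<bar>a$i0\<bar>" .
      show "norm (x - y) \<le> \<epsilon>" using y by (simp add: dist_norm)
    qed (use d1 in auto)
    finally have ax: "\<bar>a \<bullet> x - b\<bar> \<le> real CARD('n) * \<bar>a$i0\<bar> * \<epsilon>" by (simp add: d_def)
    have "\<bar>real (p i0) - cc (p(i0 := 0))\<bar> \<le> (2 * d) * 3^j"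
      unfolding cc_def d_def by (rule window_ineq[OF _ ax amax a0 eps(2)]) (use p m_def in simp)
    then have "p i0 \<in> W (p(i0 := 0))" using p unfolding W_def PP_def m_def by auto
    moreover have "p(i0 := 0) \<in> R" using p CP_zero unfolding R_def PP_def by auto
    ultimately have "p \<in> B" unfolding B_def by (auto intro!: image_eqI[where x="(p(i0 := 0), p i0)"])
    then show ?thesis using p by blast
  qed
  have "hausdorff_pre (s0 TYPE('n)) \<delta> A \<le> ennreal (real (card B) * (real CARD('n) / 3^m) powr (s0 TYPE('n)))"
    by (rule cover_by_level[OF _ BP cov \<delta> _ s0_pos]) (use A_def dm d_def in auto)
  also have "real (card B) * (real CARD('n) / 3^m) powr (s0 TYPE('n))
      \<le> (4 * real CARD('n) + 3) * real CARD('n) powr s0 TYPE('n) / 2^n"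
  proof -
    have fR: "finite R" unfolding R_def by (rule finR)
    have fW: "finite (W r)" for r unfolding W_def using CP_finite by auto
    have "card B \<le> card (SIGMA r:R. W r)" unfolding B_def by (rule card_image_le) (use fR fW in auto)
    also have "\<dots> = (\<Sum>r\<in>R. card (W r))" using fR fW by simp
    finally have "real (card B) \<le> real (\<Sum>r\<in>R. card (W r))" by (rule of_nat_mono)
    also have "\<dots> = (\<Sum>r\<in>R. real (card (W r)))" by simp
    also have "\<dots> \<le> (\<Sum>r\<in>R. (2 * (2 * d) + 3) * 2^j)"
    proof (rule sum_mono)
      fix r show "real (card (W r)) \<le> (2 * (2 * d) + 3) * 2^j"
        unfolding W_def by (rule CP_window) (use d1 in simp)
    qed
    also have "\<dots> = real (card R) * ((4 * d + 3) * 2^j)" by simp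
    also have "real (card R) = 2^(m * (CARD('n) - 1))" unfolding R_def by (simp add: cardR)
    finally have cB: "real (card B) \<le> 2^(m * (CARD('n) - 1)) * ((4 * d + 3) * 2^j)" .
    have e: "(2::real)^(m * CARD('n)) = 2^(m * (CARD('n) - 1)) * 2^j * 2^n"
    proof -
      obtain c where c: "CARD('n) = Suc c" using zero_less_card_finite[where 'a='n] by (metis Suc_pred)
      have "m * CARD('n) = m * (CARD('n) - 1) + j + n"
        unfolding c m_def by simp
      then show ?thesis by (simp add: power_add)
    qed
    have "real (card B) * (real CARD('n) / 3^m) powr (s0 TYPE('n))
        = real (card B) * (d powr s0 TYPE('n) / 2^(m * CARD('n)))" by (simp add: powr_s0_level d_def)
    also have "\<dots> \<le> (2^(m * (CARD('n) - 1)) * ((4 * d + 3) * 2^j)) * (d powr s0 TYPE('n) / 2^(m * CARD('n)))"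
      using cB by (intro mult_right_mono) auto
    also have "\<dots> = (4 * d + 3) * d powr s0 TYPE('n) / 2^n"
      unfolding e by (simp add: field_simps)
    finally show ?thesis unfolding d_def .
  qed
  finally show "hausdorff_pre (s0 TYPE('n)) \<delta> (open_nbhd {x. a \<bullet> x = b} \<epsilon> \<inter> cantor_dust)
      \<le> ennreal ((4 * real CARD('n) + 3) * real CARD('n) powr s0 TYPE('n) / 2^n)"
    unfolding A_def by (simp add: ennreal_leI)
qed



lemma nbhd_lower:
  fixes i0 :: "'n::finite"
  assumes "1/3^n < \<epsilon>"
  shows "ennreal (1 / 2^n / 3 powr s0 TYPE('n))
     \<le> hausdorff_measure (s0 TYPE('n)) (open_nbhd {x::real^'n. axis i0 1 \<bullet> x = 0} \<epsilon> \<inter> cantor_dust)"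
proof -
  define F where "F = {p :: 'n \<Rightarrow> nat. \<forall>i. p i \<in> (if i = i0 then {0} else CP n)}"
  have FP: "F \<subseteq> PP n" unfolding F_def PP_def using CP_zero by (auto split: if_splits)
  have cF: "card F = 2^(n * (CARD('n) - 1))" unfolding F_def by (rule cardR)
  have e: "real (card F) / 2^(n * CARD('n)) = 1 / 2^n"
  proof -
    obtain c where c: "CARD('n) = Suc c" using zero_less_card_finite[where 'a='n] by (metis Suc_pred)
    have "n * CARD('n) = n * (CARD('n) - 1) + n" unfolding c by simp
    then have "(2::real)^(n * CARD('n)) = 2^(n * (CARD('n) - 1)) * 2^n" by (simp add: power_add)
    then show ?thesis using cF by simp
  qed
  have "ennreal (real (card F) / 2^(n * CARD('n)) / 3 powr s0 TYPE('n))
       \<le> hausdorff_pre (s0 TYPE('n)) 1 (cantor_dust \<inter> (\<Union>p\<in>F. cube n p))"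
    by (rule LB[OF FP]) (use s0_pos[where 'n='n] in auto)
  also have "\<dots> \<le> hausdorff_pre (s0 TYPE('n)) 1 (open_nbhd {x::real^'n. axis i0 1 \<bullet> x = 0} \<epsilon> \<inter> cantor_dust)"
  proof (rule hausdorff_pre_mono)
    show "cantor_dust \<inter> (\<Union>p\<in>F. cube n p) \<subseteq> open_nbhd {x::real^'n. axis i0 1 \<bullet> x = 0} \<epsilon> \<inter> cantor_dust"
    proof
      fix x :: "real^'n" assume x: "x \<in> cantor_dust \<inter> (\<Union>p\<in>F. cube n p)"
      then obtain p where p: "p \<in> F" "x \<in> cube n p" by auto
      have "p i0 \<in> (if i0 = i0 then {0} else CP n)" using p unfolding F_def by blast
      then have "p i0 = 0" by simp
      moreover have "x$i0 \<in> ivl n (p i0)" using p by (auto simp: cube_def)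
      ultimately have xi: "0 \<le> x$i0" "x$i0 \<le> 1/3^n" by (auto simp: ivl_mem)
      define y where "y = (\<chi> j. if j = i0 then 0 else x$j)"
      have "axis i0 1 \<bullet> y = 0" by (simp add: inner_axis' y_def)
      moreover have "dist x y < \<epsilon>"
      proof -
        have "dist x y = norm (x - y)" by (simp add: dist_norm)
        also have "\<dots> \<le> (\<Sum>j\<in>UNIV. \<bar>(x - y)$j\<bar>)" by (rule norm_le_l1_cart)
        also have "(\<Sum>j\<in>UNIV. \<bar>(x - y)$j\<bar>) = (\<Sum>j\<in>UNIV. if j = i0 then \<bar>x$i0\<bar> else 0)"
          by (rule sum.cong) (auto simp: y_def)
        also have "\<dots> = \<bar>x$i0\<bar>" by simp
        finally show ?thesis using xi assms by linarith
      qed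
      ultimately show "x \<in> open_nbhd {x::real^'n. axis i0 1 \<bullet> x = 0} \<epsilon> \<inter> cantor_dust"
        using x unfolding open_nbhd_def by auto
    qed
  qed
  also have "\<dots> \<le> hausdorff_measure (s0 TYPE('n)) (open_nbhd {x::real^'n. axis i0 1 \<bullet> x = 0} \<epsilon> \<inter> cantor_dust)"
    by (rule hausdorff_measure_ge) simp
  finally show ?thesis using e by simp
qed

lemma three_powr_alpha: "3 powr (ln 2 / ln 3) = (2::real)"
  by (simp add: powr_def)

lemma inv_pow_alpha: "(1/3^k :: real) powr (ln 2 / ln 3) = 1/2^k"
proof -
  have "(1/3^k :: real) powr (ln 2 / ln 3) = 1 / (3 powr (ln 2 / ln 3))^k"
    by (simp add: powr_divide powr_realpow[symmetric] powr_powr mult.commute)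
  then show ?thesis by (simp add: three_powr_alpha)
qed

lemma S_bounds:
  fixes \<mu> :: "(real^'n::finite) set \<Rightarrow> ennreal"
  assumes \<mu>: "\<mu> = (\<lambda>A. hausdorff_measure (s0 TYPE('n)) (A \<inter> cantor_dust))"
    and \<epsilon>: "0 < \<epsilon>" "\<epsilon> < 1"
  shows "(1 / 3 powr s0 TYPE('n) / 4) * \<epsilon> powr (ln 2 / ln 3)
           \<le> enn2real (SUP L\<in>affine_hyperplanes. \<mu> (open_nbhd L \<epsilon>))
       \<and> enn2real (SUP L\<in>affine_hyperplanes. \<mu> (open_nbhd L \<epsilon>))
           \<le> (2 * ((4 * real CARD('n) + 3) * real CARD('n) powr s0 TYPE('n))) * \<epsilon> powr (ln 2 / ln 3)"
proof -
  define \<alpha> where "\<alpha> = ln (2::real) / ln 3"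
  define Cu where "Cu = (4 * real CARD('n) + 3) * real CARD('n) powr s0 TYPE('n)"
  define S where "S = (SUP L\<in>affine_hyperplanes. \<mu> (open_nbhd L \<epsilon>))"
  have Cu0: "Cu \<ge> 0" unfolding Cu_def by simp
  obtain k where k: "1/3^(Suc k) \<le> \<epsilon>" "\<epsilon> < 1/3^k" using three_scale[OF \<epsilon>] by blast
  have up: "S \<le> ennreal (Cu / 2^k)"
    unfolding S_def
  proof (rule SUP_least)
    fix L :: "(real^'n) set" assume "L \<in> affine_hyperplanes"
    then obtain a b where L: "L = {x. a \<bullet> x = b}" "a \<noteq> 0" unfolding affine_hyperplanes_def by blast
    show "\<mu> (open_nbhd L \<epsilon>) \<le> ennreal (Cu / 2^k)"
      unfolding \<mu> L(1) Cu_def by (rule nbhd_upper[OF L(2) \<epsilon>(1)]) (use k in simp)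
  qed
  define i0 :: 'n where "i0 = undefined"
  have L0: "{x::real^'n. axis i0 1 \<bullet> x = 0} \<in> affine_hyperplanes"
    unfolding affine_hyperplanes_def by (auto intro!: exI[of _ "axis i0 1"])
  have "(1::real)/3^(Suc (Suc k)) < 1/3^(Suc k)" by (rule divide_strict_left_mono) auto
  then have "1/3^(Suc (Suc k)) < \<epsilon>" using k by linarith
  then have "ennreal (1 / 2^(Suc (Suc k)) / 3 powr s0 TYPE('n))
     \<le> hausdorff_measure (s0 TYPE('n)) (open_nbhd {x::real^'n. axis i0 1 \<bullet> x = 0} \<epsilon> \<inter> cantor_dust)"
    by (rule nbhd_lower)
  also have "\<dots> \<le> S" unfolding S_def \<mu> by (rule SUP_upper[OF L0])
  finally have low: "ennreal (1 / 2^(Suc (Suc k)) / 3 powr s0 TYPE('n)) \<le> S" .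
  have T_up: "enn2real S \<le> Cu / 2^k" by (rule enn2real_leI) (use Cu0 up in auto)
  have "S < top" using up by (metis ennreal_less_top order.strict_trans1)
  then have T_low: "1 / 2^(Suc (Suc k)) / 3 powr s0 TYPE('n) \<le> enn2real S"
    using enn2real_mono[OF low] by simp
  have e1: "1 / 2^k \<le> 2 * \<epsilon> powr \<alpha>"
  proof -
    have "1/3^k \<le> 3 * \<epsilon>" using k by (simp add: field_simps)
    then have "(1/3^k :: real) powr \<alpha> \<le> (3 * \<epsilon>) powr \<alpha>" unfolding \<alpha>_def by (intro powr_mono2) auto
    then show ?thesis unfolding \<alpha>_def by (simp add: inv_pow_alpha powr_mult three_powr_alpha)
  qed
  have e2: "\<epsilon> powr \<alpha> / 4 \<le> 1 / 2^(Suc (Suc k))"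
  proof -
    have "\<epsilon> / 9 \<le> 1/3^(Suc (Suc k))" using k by (simp add: field_simps)
    then have "(\<epsilon> / 9) powr \<alpha> \<le> (1/3^(Suc (Suc k)) :: real) powr \<alpha>" unfolding \<alpha>_def using \<epsilon> by (intro powr_mono2) auto
    moreover have "(9::real) powr \<alpha> = 4"
    proof -
      have "(9::real) powr \<alpha> = (3 * 3) powr \<alpha>" by simp
      also have "\<dots> = 4" unfolding powr_mult \<alpha>_def three_powr_alpha by simp
      finally show ?thesis .
    qed
    ultimately have "(\<epsilon> / 9) powr \<alpha> = \<epsilon> powr \<alpha> / 4" by (simp add: powr_divide)
    moreover have "(1/3^(Suc (Suc k)) :: real) powr \<alpha> = 1/2^(Suc (Suc k))"
      unfolding \<alpha>_def by (rule inv_pow_alpha)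
    ultimately show ?thesis using \<open>(\<epsilon> / 9) powr \<alpha> \<le> (1/3^(Suc (Suc k)) :: real) powr \<alpha>\<close> by simp
  qed
  have "Cu / 2^k \<le> (2 * Cu) * \<epsilon> powr \<alpha>"
    using mult_left_mono[OF e1 Cu0] by (simp add: field_simps)
  moreover have "(1 / 3 powr s0 TYPE('n) / 4) * \<epsilon> powr \<alpha> \<le> 1 / 2^(Suc (Suc k)) / 3 powr s0 TYPE('n)"
    using divide_right_mono[OF e2, of "3 powr s0 TYPE('n)"] by (simp add: field_simps)
  ultimately show ?thesis using T_up T_low unfolding S_def Cu_def \<alpha>_def by linarith
qed

lemma lim_alpha_plus: "((\<lambda>\<epsilon>::real. \<alpha> + c / ln \<epsilon>) \<longlongrightarrow> \<alpha>) (at_right 0)"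
proof -
  have "filterlim ln at_infinity (at_right (0::real))"
    by (rule filterlim_mono[OF ln_at_0 at_bot_le_at_infinity order_refl])
  then have "((\<lambda>\<epsilon>::real. c / ln \<epsilon>) \<longlongrightarrow> 0) (at_right 0)"
    by (rule tendsto_divide_0[OF tendsto_const])
  then show ?thesis using tendsto_add[OF tendsto_const, of "\<lambda>\<epsilon>. c / ln \<epsilon>" 0 _ \<alpha>] by simp
qed

theorem mainTheorem8:
  fixes s :: real
    and \<mu> :: "(real ^ 'n) set \<Rightarrow> ennreal"
  assumes "s = hausdorff_dim (cantor_dust :: (real ^ 'n) set)"
    and "\<mu> = (\<lambda>A. hausdorff_measure s (A \<inter> cantor_dust))"
  shows "alpha1 \<mu> = ereal (ln 2 / ln 3)"
proof -
  have s: "s = s0 TYPE('n)" using assms(1) by (simp add: dust_dim)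
  have \<mu>: "\<mu> = (\<lambda>A. hausdorff_measure (s0 TYPE('n)) (A \<inter> cantor_dust))" using assms(2) s by simp
  define \<alpha> where "\<alpha> = ln (2::real) / ln 3"
  define cl where "cl = 1 / 3 powr s0 TYPE('n) / 4"
  define ch where "ch = 2 * ((4 * real CARD('n) + 3) * real CARD('n) powr s0 TYPE('n))"
  define f where "f \<epsilon> = ln (enn2real (SUP L\<in>affine_hyperplanes. \<mu> (open_nbhd L \<epsilon>))) / ln \<epsilon>" for \<epsilon> :: real
  have cl0: "cl > 0" unfolding cl_def by simp
  have ev: "eventually (\<lambda>\<epsilon>. \<epsilon> \<in> {0<..<1}) (at_right (0::real))"
    by (rule eventually_at_right_real) simp
  have bnd: "\<alpha> + ln ch / ln \<epsilon> \<le> f \<epsilon> \<and> f \<epsilon> \<le> \<alpha> + ln cl / ln \<epsilon>" if e: "\<epsilon> \<in> {0<..<1}" for \<epsilon>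
  proof -
    define T where "T = enn2real (SUP L\<in>affine_hyperplanes. \<mu> (open_nbhd L \<epsilon>))"
    have e0: "0 < \<epsilon>" "\<epsilon> < 1" using e by auto
    have TB: "cl * \<epsilon> powr \<alpha> \<le> T" "T \<le> ch * \<epsilon> powr \<alpha>"
      using S_bounds[OF \<mu> e0] unfolding T_def cl_def ch_def \<alpha>_def by auto
    have ep: "\<epsilon> powr \<alpha> > 0" using e0 by simp
    have clp: "cl * \<epsilon> powr \<alpha> > 0" using cl0 ep by simp
    then have Tp: "T > 0" using TB by linarith
    have chp: "ch * \<epsilon> powr \<alpha> > 0" using Tp TB by linarith
    then have ch0: "ch > 0" using ep by (simp add: zero_less_mult_iff)
    have lnl: "ln (cl * \<epsilon> powr \<alpha>) \<le> ln T" using TB(1) clp Tp by simp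
    have lnh: "ln T \<le> ln (ch * \<epsilon> powr \<alpha>)" using TB(2) chp Tp by simp
    have l1: "ln (cl * \<epsilon> powr \<alpha>) = ln cl + \<alpha> * ln \<epsilon>" using cl0 ep e0 by (simp add: ln_mult)
    have l2: "ln (ch * \<epsilon> powr \<alpha>) = ln ch + \<alpha> * ln \<epsilon>" using ch0 ep e0 by (simp add: ln_mult)
    have lne: "ln \<epsilon> < 0" using e0 by simp
    have "f \<epsilon> = ln T / ln \<epsilon>" unfolding f_def T_def ..
    moreover have "ln T / ln \<epsilon> \<le> (ln cl + \<alpha> * ln \<epsilon>) / ln \<epsilon>"
      using lnl l1 lne by (intro divide_right_mono_neg) auto
    moreover have "(ln ch + \<alpha> * ln \<epsilon>) / ln \<epsilon> \<le> ln T / ln \<epsilon>"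
      using lnh l2 lne by (intro divide_right_mono_neg) auto
    moreover have "(ln cl + \<alpha> * ln \<epsilon>) / ln \<epsilon> = \<alpha> + ln cl / ln \<epsilon>" using lne by (simp add: field_simps)
    moreover have "(ln ch + \<alpha> * ln \<epsilon>) / ln \<epsilon> = \<alpha> + ln ch / ln \<epsilon>" using lne by (simp add: field_simps)
    ultimately show ?thesis by simp
  qed
  have "(f \<longlongrightarrow> \<alpha>) (at_right 0)"
  proof (rule tendsto_sandwich[OF _ _ lim_alpha_plus lim_alpha_plus])
    show "\<forall>\<^sub>F \<epsilon> in at_right 0. \<alpha> + ln ch / ln \<epsilon> \<le> f \<epsilon>" using ev by (rule eventually_mono) (use bnd in blast)
    show "\<forall>\<^sub>F \<epsilon> in at_right 0. f \<epsilon> \<le> \<alpha> + ln cl / ln \<epsilon>" using ev by (rule eventually_mono) (use bnd in blast)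
  qed
  then have "((\<lambda>\<epsilon>. ereal (f \<epsilon>)) \<longlongrightarrow> ereal \<alpha>) (at_right 0)" by (rule tendsto_ereal)
  then have "Liminf (at_right 0) (\<lambda>\<epsilon>. ereal (f \<epsilon>)) = ereal \<alpha>"
    by (rule lim_imp_Liminf[rotated]) simp
  then show ?thesis unfolding alpha1_def f_def \<alpha>_def .
qed

end
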